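(* Let $X$ be a real Banach space and $A: X\rightrightarrows X^*$ maximal monotone. For every $w\in\mathrm{dom}(A)$, $v^*\in\mathrm{Im}(A)$ and $(x,x^* )\in X\times X^*$: (i) $F_A(x,v^* )\le g_{A,v^*}^*(x)\le P_A(x,v^* )$; (ii) $F_A(w,x^* )\le f_{A,w}^*(x^* )\le P_A(w,x^* )$.
   Context: $F_A(x,x^* )=\sup_{(y,y^* )\in\mathrm{Gr}(A)}\{\langle y,x^*\rangle+\langle x,y^*\rangle-\langle y,y^*\rangle\}$. Let $\phi(x,x^* )=\langle x,x^*\rangle$ if $(x,x^* )\in\mathrm{Gr}(A)$ and $+\infty$ otherwise; $P_A$ is the restriction to $X\times X^*$ of the biconjugate $\phi^{**}$. $f_{A,w}(x)=\inf_{a^*\in X^*}\{P_A(x,a^* )-\langle w,a^*\rangle\}$ and $g_{A,v^*}(x^* )=\inf_{a\in X}\{P_A(a,x^* )-\langle a,v^*\rangle\}$. The conjugates are $f_{A,w}^*(x^* )=\sup_{y\in X}\{\langle y,x^*\rangle-f_{A,w}(y)\}$ and $g_{A,v^*}^*(x)=\sup_{y^*\in X^*}\{\langle x,y^*\rangle-g_{A,v^*}(y^* )\}$. *)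

theory Defs
  imports "HOL-Analysis.Analysis"
begin

(* X is a real Banach space 'a::banach; X* is 'a \<Rightarrow>\<^sub>L real; X-bidual is ('a \<Rightarrow>\<^sub>L real) \<Rightarrow>\<^sub>L real.
  A multivalued operator A : X \<rightrightarrows> X* is identified with its graph, a set of pairs. *)

definition monotone_op :: "('a::real_normed_vector \<times> ('a \<Rightarrow>\<^sub>L real)) set \<Rightarrow> bool" where
  "monotone_op A \<longleftrightarrow> (\<forall>(x,x')\<in>A. \<forall>(y,y')\<in>A. 0 \<le> blinfun_apply (x' - y') (x - y))"

definition maximal_monotone :: "('a::real_normed_vector \<times> ('a \<Rightarrow>\<^sub>L real)) set \<Rightarrow> bool" where
  "maximal_monotone A \<longleftrightarrow> monotone_op A \<and> (\<forall>B. monotone_op B \<and> A \<subseteq> B \<longrightarrow> B = A)"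

definition fitz :: "('a::real_normed_vector \<times> ('a \<Rightarrow>\<^sub>L real)) set \<Rightarrow> 'a \<Rightarrow> ('a \<Rightarrow>\<^sub>L real) \<Rightarrow> ereal" where
  "fitz A x x' = (SUP p\<in>A. ereal (blinfun_apply x' (fst p) + blinfun_apply (snd p) x
                                   - blinfun_apply (snd p) (fst p)))"

definition phiA :: "('a::real_normed_vector \<times> ('a \<Rightarrow>\<^sub>L real)) set \<Rightarrow> 'a \<Rightarrow> ('a \<Rightarrow>\<^sub>L real) \<Rightarrow> ereal" where
  "phiA A x x' = (if (x, x') \<in> A then ereal (blinfun_apply x' x) else \<infinity>)"

definition phiA_conj :: "('a::real_normed_vector \<times> ('a \<Rightarrow>\<^sub>L real)) set
     \<Rightarrow> ('a \<Rightarrow>\<^sub>L real) \<Rightarrow> (('a \<Rightarrow>\<^sub>L real) \<Rightarrow>\<^sub>L real) \<Rightarrow> ereal" where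
  "phiA_conj A y' y'' = (SUP p\<in>(UNIV :: ('a \<times> ('a \<Rightarrow>\<^sub>L real)) set).
       ereal (blinfun_apply y' (fst p) + blinfun_apply y'' (snd p)) - phiA A (fst p) (snd p))"

(* P_A: the biconjugate of phi restricted to X times X-dual via the canonical embeddings. *)
definition PA :: "('a::real_normed_vector \<times> ('a \<Rightarrow>\<^sub>L real)) set \<Rightarrow> 'a \<Rightarrow> ('a \<Rightarrow>\<^sub>L real) \<Rightarrow> ereal" where
  "PA A x x' = (SUP q\<in>(UNIV :: (('a \<Rightarrow>\<^sub>L real) \<times> (('a \<Rightarrow>\<^sub>L real) \<Rightarrow>\<^sub>L real)) set).
       ereal (blinfun_apply (fst q) x + blinfun_apply (snd q) x') - phiA_conj A (fst q) (snd q))"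

definition fAw :: "('a::real_normed_vector \<times> ('a \<Rightarrow>\<^sub>L real)) set \<Rightarrow> 'a \<Rightarrow> 'a \<Rightarrow> ereal" where
  "fAw A w x = (INF a'\<in>(UNIV :: ('a \<Rightarrow>\<^sub>L real) set). PA A x a' - ereal (blinfun_apply a' w))"

definition gAv :: "('a::real_normed_vector \<times> ('a \<Rightarrow>\<^sub>L real)) set \<Rightarrow> ('a \<Rightarrow>\<^sub>L real) \<Rightarrow> ('a \<Rightarrow>\<^sub>L real) \<Rightarrow> ereal" where
  "gAv A v' x' = (INF a\<in>(UNIV :: 'a set). PA A a x' - ereal (blinfun_apply v' a))"

definition fAw_conj :: "('a::real_normed_vector \<times> ('a \<Rightarrow>\<^sub>L real)) set \<Rightarrow> 'a \<Rightarrow> ('a \<Rightarrow>\<^sub>L real) \<Rightarrow> ereal" where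
  "fAw_conj A w x' = (SUP y\<in>(UNIV :: 'a set). ereal (blinfun_apply x' y) - fAw A w y)"

definition gAv_conj :: "('a::real_normed_vector \<times> ('a \<Rightarrow>\<^sub>L real)) set \<Rightarrow> ('a \<Rightarrow>\<^sub>L real) \<Rightarrow> 'a \<Rightarrow> ereal" where
  "gAv_conj A v' x = (SUP y'\<in>(UNIV :: ('a \<Rightarrow>\<^sub>L real) set). ereal (blinfun_apply y' x) - gAv A v' y')"

end

theory Submission
  imports Defs
begin

definition emb :: "'a::real_normed_vector \<Rightarrow> ('a \<Rightarrow>\<^sub>L real) \<Rightarrow>\<^sub>L real" where
  "emb a = Blinfun (\<lambda>f. blinfun_apply f a)"

lemma emb_apply[simp]: "blinfun_apply (emb a) f = blinfun_apply f a"
  unfolding emb_def by (simp add: bounded_linear_Blinfun_apply bounded_linear_apply_blinfun)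

lemma P_le_phi:
  assumes "(b, bs) \<in> A"
  shows "PA A b bs \<le> ereal (blinfun_apply bs b)"
  unfolding PA_def
proof (rule SUP_least)
  fix q :: "('a \<Rightarrow>\<^sub>L real) \<times> (('a \<Rightarrow>\<^sub>L real) \<Rightarrow>\<^sub>L real)"
  let ?r = "blinfun_apply (fst q) b + blinfun_apply (snd q) bs"
  have "ereal ?r - phiA A b bs \<le> phiA_conj A (fst q) (snd q)"
    unfolding phiA_conj_def by (rule SUP_upper2[where i="(b,bs)"]) auto
  then have "ereal ?r - ereal (blinfun_apply bs b) \<le> phiA_conj A (fst q) (snd q)"
    using assms by (simp add: phiA_def)
  then show "ereal ?r - phiA_conj A (fst q) (snd q) \<le> ereal (blinfun_apply bs b)"
    by (cases "phiA_conj A (fst q) (snd q)") auto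
qed

lemma phiconj_le_fitz: "phiA_conj A y' (emb y) \<le> fitz A y y'"
  unfolding phiA_conj_def
proof (rule SUP_least)
  fix p :: "'a \<times> ('a \<Rightarrow>\<^sub>L real)"
  show "ereal (blinfun_apply y' (fst p) + blinfun_apply (emb y) (snd p)) - phiA A (fst p) (snd p)
        \<le> fitz A y y'"
  proof (cases "p \<in> A")
    case True
    have "ereal (blinfun_apply y' (fst p) + blinfun_apply (snd p) y - blinfun_apply (snd p) (fst p)) \<le> fitz A y y'"
      unfolding fitz_def by (rule SUP_upper[OF True])
    then show ?thesis using True by (cases p) (simp add: phiA_def)
  next
    case False
    then show ?thesis by (cases p) (simp add: phiA_def)
  qed
qed

lemma fitz_on_graph:
  assumes "monotone_op A" "(b, bs) \<in> A"
  shows "fitz A b bs \<le> ereal (blinfun_apply bs b)"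
  unfolding fitz_def
proof (rule SUP_least)
  fix p assume p: "p \<in> A"
  obtain c cs where pc: "p = (c, cs)" by (cases p)
  have "0 \<le> blinfun_apply (cs - bs) (c - b)"
    using assms p pc unfolding monotone_op_def by fast
  then have "blinfun_apply bs c + blinfun_apply cs b - blinfun_apply cs c \<le> blinfun_apply bs b"
    by (simp add: blinfun.diff_left blinfun.diff_right)
  then show "ereal (blinfun_apply bs (fst p) + blinfun_apply (snd p) b - blinfun_apply (snd p) (fst p))
         \<le> ereal (blinfun_apply bs b)" using pc by simp
qed

lemma P_ge_fitz_dual:
  "ereal (blinfun_apply y x + blinfun_apply v a) - fitz A a y \<le> PA A x v"
proof -
  have "ereal (blinfun_apply y x + blinfun_apply v a) - fitz A a y
      \<le> ereal (blinfun_apply y x + blinfun_apply (emb a) v) - phiA_conj A y (emb a)"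
    using phiconj_le_fitz[of A y a] by (simp add: ereal_minus_mono)
  also have "\<dots> \<le> PA A x v"
    unfolding PA_def by (rule SUP_upper2[where i="(y, emb a)"]) auto
  finally show ?thesis .
qed

lemma fitz_le_P:
  assumes "monotone_op A"
  shows "fitz A a y \<le> PA A a y"
  unfolding fitz_def
proof (rule SUP_least)
  fix p assume p: "p \<in> A"
  obtain b bs where pc: "p = (b, bs)" by (cases p)
  have "ereal (blinfun_apply bs a + blinfun_apply y b) - fitz A b bs \<le> PA A a y"
    by (rule P_ge_fitz_dual)
  moreover have "ereal (blinfun_apply bs a + blinfun_apply y b) - ereal (blinfun_apply bs b)
      \<le> ereal (blinfun_apply bs a + blinfun_apply y b) - fitz A b bs"
    using fitz_on_graph[OF assms p[unfolded pc]] by (cases "fitz A b bs") auto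
  ultimately show "ereal (blinfun_apply y (fst p) + blinfun_apply (snd p) a - blinfun_apply (snd p) (fst p))
         \<le> PA A a y" using pc by (simp add: add.commute add_diff_eq)
qed

lemma fitz_gt:
  assumes "A \<noteq> {}"
  shows "fitz A a y \<noteq> -\<infinity>"
proof -
  obtain p where p: "p \<in> A" using assms by blast
  have "ereal (blinfun_apply y (fst p) + blinfun_apply (snd p) a - blinfun_apply (snd p) (fst p)) \<le> fitz A a y"
    unfolding fitz_def by (rule SUP_upper[OF p])
  then show ?thesis by auto
qed

lemma key:
  assumes "monotone_op A" "A \<noteq> {}"
  shows "ereal (blinfun_apply y x + blinfun_apply v a - p) \<le> PA A a y
         \<or> PA A x v \<noteq> ereal p"
proof (cases "PA A x v = ereal p")
  case True
  have h1: "ereal (blinfun_apply y x + blinfun_apply v a) - fitz A a y \<le> ereal p"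
    using P_ge_fitz_dual[of y x v a A] True by simp
  have h2: "fitz A a y \<le> PA A a y" by (rule fitz_le_P[OF assms(1)])
  have h3: "fitz A a y \<noteq> -\<infinity>" by (rule fitz_gt[OF assms(2)])
  show ?thesis
  proof (cases "fitz A a y")
    case (real f)
    then show ?thesis using h1 h2 by (cases "PA A a y") auto
  qed (use h1 h2 h3 in auto)
qed simp

lemma P_not_minf:
  assumes "monotone_op A" "A \<noteq> {}"
  shows "PA A x v \<noteq> -\<infinity>"
  using fitz_le_P[OF assms(1), of x v] fitz_gt[OF assms(2), of x v] by auto

theorem lemma3p4:
  fixes A :: "('a::banach \<times> ('a \<Rightarrow>\<^sub>L real)) set"
    and w x :: 'a and v' x' :: "'a \<Rightarrow>\<^sub>L real"
  assumes "maximal_monotone A"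
    and "w \<in> Domain A"
    and "v' \<in> Range A"
  shows "fitz A x v' \<le> gAv_conj A v' x \<and> gAv_conj A v' x \<le> PA A x v'
       \<and> fitz A w x' \<le> fAw_conj A w x' \<and> fAw_conj A w x' \<le> PA A w x'"
proof (intro conjI)
  have mon: "monotone_op A" using assms(1) unfolding maximal_monotone_def by simp
  have ne: "A \<noteq> {}" using assms(3) by auto
  show "fitz A x v' \<le> gAv_conj A v' x"
    unfolding fitz_def
  proof (rule SUP_least)
    fix p assume p: "p \<in> A"
    obtain b bs where pc: "p = (b, bs)" by (cases p)
    have "gAv A v' bs \<le> PA A b bs - ereal (blinfun_apply v' b)"
      unfolding gAv_def by (rule INF_lower) simp
    also have "\<dots> \<le> ereal (blinfun_apply bs b) - ereal (blinfun_apply v' b)"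
      using P_le_phi[OF p[unfolded pc]] by (cases "PA A b bs") auto
    finally have g: "gAv A v' bs \<le> ereal (blinfun_apply bs b - blinfun_apply v' b)" by simp
    have "ereal (blinfun_apply bs x) - gAv A v' bs \<le> gAv_conj A v' x"
      unfolding gAv_conj_def by (rule SUP_upper) simp
    moreover have "ereal (blinfun_apply v' b + blinfun_apply bs x - blinfun_apply bs b)
       \<le> ereal (blinfun_apply bs x) - gAv A v' bs"
      using g by (cases "gAv A v' bs") auto
    ultimately show "ereal (blinfun_apply v' (fst p) + blinfun_apply (snd p) x - blinfun_apply (snd p) (fst p))
        \<le> gAv_conj A v' x" using pc by simp
  qed
  show "gAv_conj A v' x \<le> PA A x v'"
    unfolding gAv_conj_def
  proof (rule SUP_least)
    fix y :: "'a \<Rightarrow>\<^sub>L real"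
    show "ereal (blinfun_apply y x) - gAv A v' y \<le> PA A x v'"
    proof (cases "PA A x v'")
      case (real p)
      have "ereal (blinfun_apply y x - p) \<le> gAv A v' y"
        unfolding gAv_def
      proof (rule INF_greatest)
        fix a :: 'a
        have "ereal (blinfun_apply y x + blinfun_apply v' a - p) \<le> PA A a y"
          using key[OF mon ne, of y x v' a p] real by simp
        then show "ereal (blinfun_apply y x - p) \<le> PA A a y - ereal (blinfun_apply v' a)"
          by (cases "PA A a y") auto
      qed
      then show ?thesis using real by (cases "gAv A v' y") auto
    qed (use P_not_minf[OF mon ne] in auto)
  qed
  show "fitz A w x' \<le> fAw_conj A w x'"
    unfolding fitz_def
  proof (rule SUP_least)
    fix p assume p: "p \<in> A"
    obtain b bs where pc: "p = (b, bs)" by (cases p)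
    have "fAw A w b \<le> PA A b bs - ereal (blinfun_apply bs w)"
      unfolding fAw_def by (rule INF_lower) simp
    also have "\<dots> \<le> ereal (blinfun_apply bs b) - ereal (blinfun_apply bs w)"
      using P_le_phi[OF p[unfolded pc]] by (cases "PA A b bs") auto
    finally have g: "fAw A w b \<le> ereal (blinfun_apply bs b - blinfun_apply bs w)" by simp
    have "ereal (blinfun_apply x' b) - fAw A w b \<le> fAw_conj A w x'"
      unfolding fAw_conj_def by (rule SUP_upper) simp
    moreover have "ereal (blinfun_apply x' b + blinfun_apply bs w - blinfun_apply bs b)
       \<le> ereal (blinfun_apply x' b) - fAw A w b"
      using g by (cases "fAw A w b") auto
    ultimately show "ereal (blinfun_apply x' (fst p) + blinfun_apply (snd p) w - blinfun_apply (snd p) (fst p))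
        \<le> fAw_conj A w x'" using pc by simp
  qed
  show "fAw_conj A w x' \<le> PA A w x'"
    unfolding fAw_conj_def
  proof (rule SUP_least)
    fix y :: 'a
    show "ereal (blinfun_apply x' y) - fAw A w y \<le> PA A w x'"
    proof (cases "PA A w x'")
      case (real p)
      have "ereal (blinfun_apply x' y - p) \<le> fAw A w y"
        unfolding fAw_def
      proof (rule INF_greatest)
        fix as :: "'a \<Rightarrow>\<^sub>L real"
        have "ereal (blinfun_apply as w + blinfun_apply x' y - p) \<le> PA A y as"
          using key[OF mon ne, of as w x' y p] real by simp
        then show "ereal (blinfun_apply x' y - p) \<le> PA A y as - ereal (blinfun_apply as w)"
          by (cases "PA A y as") auto
      qed
      then show ?thesis using real by (cases "fAw A w y") auto
    qed (use P_not_minf[OF mon ne] in auto)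
  qed
qed

end
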